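(* Let $T$ be a linear operator in $H$ with $W(T)=\mathbb C$. (i) Let $x,y\in\operatorname{dom}(T)$, $\|x\|=\|y\|=1$, be linearly independent. Then, for all but at most three $t\in\mathbb C$, \[ W\big(T|_{(y+tx)^\perp\cap\operatorname{dom}(T)}\big)=\mathbb C. \] (ii) Let $y\in\operatorname{dom}(T)$, $\|y\|=1$, be such that $\{y\}^\perp\cap\operatorname{dom}(T)\neq\{0\}$. Then for every $\varepsilon>0$ there exists $w_\varepsilon\in\operatorname{dom}(T)$ with $\|w_\varepsilon\|=1$, \[ W\big(T|_{\{w_\varepsilon\}^\perp\cap\operatorname{dom}(T)}\big)=\mathbb C\quad\text{and}\quad|\langle Tw_\varepsilon,w_\varepsilon\rangle-\langle Ty,y\rangle|<\varepsilon. \]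
   Context: $H$ is a separable infinite-dimensional complex Hilbert space; $T$ need not be closed, closable or densely defined. $W(T)=\{\langle Tx,x\rangle:x\in\operatorname{dom}(T),\|x\|=1\}$; for a subspace $M\subset\operatorname{dom}(T)$, $T|_M$ is the restriction of $T$ to $M$, so $W(T|_M)=\{\langle Tx,x\rangle:x\in M,\|x\|=1\}$. *)

theory Defs
  imports "HOL-Analysis.Analysis"
begin

class complex_inner = real_normed_vector +
  fixes scaleC :: "complex \<Rightarrow> 'a \<Rightarrow> 'a"
    and cinner :: "'a \<Rightarrow> 'a \<Rightarrow> complex"
  assumes scaleC_of_real: "scaleC (complex_of_real r) x = scaleR r x"
    and scaleC_add_right: "scaleC a (x + y) = scaleC a x + scaleC a y"
    and scaleC_add_left: "scaleC (a + b) x = scaleC a x + scaleC b x"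
    and scaleC_scaleC: "scaleC a (scaleC b x) = scaleC (a * b) x"
    and scaleC_one: "scaleC 1 x = x"
    and cinner_commute: "cinner x y = cnj (cinner y x)"
    and cinner_add_left: "cinner (x + y) z = cinner x z + cinner y z"
    and cinner_scaleC_left: "cinner (scaleC a x) y = a * cinner x y"
    and cinner_ge_zero: "0 \<le> Re (cinner x x)"
    and cinner_eq_zero_iff: "cinner x x = 0 \<longleftrightarrow> x = 0"
    and norm_eq_sqrt_cinner: "norm x = sqrt (Re (cinner x x))"

class chilbert_space = complex_inner + complete_space

definition separable_space :: "'a::topological_space itself \<Rightarrow> bool" where
  "separable_space _ \<longleftrightarrow> (\<exists>D::'a set. countable D \<and> closure D = UNIV)"

definition cspan :: "'a::complex_inner set \<Rightarrow> 'a set" where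
  "cspan F = {\<Sum>v\<in>S. scaleC (c v) v | S c. finite S \<and> S \<subseteq> F}"

definition infinite_dimensional :: "'a::complex_inner itself \<Rightarrow> bool" where
  "infinite_dimensional _ \<longleftrightarrow> \<not> (\<exists>F::'a set. finite F \<and> cspan F = UNIV)"

text \<open>A linear operator is given by its domain \<open>D\<close> (a complex linear subspace)
and a map \<open>T\<close> that is complex linear on \<open>D\<close>; values outside \<open>D\<close> are irrelevant.\<close>

definition csubspace :: "'a::complex_inner set \<Rightarrow> bool" where
  "csubspace D \<longleftrightarrow> 0 \<in> D \<and> (\<forall>x\<in>D. \<forall>y\<in>D. x + y \<in> D) \<and> (\<forall>a. \<forall>x\<in>D. scaleC a x \<in> D)"

definition linear_operator :: "'a::complex_inner set \<Rightarrow> ('a \<Rightarrow> 'a) \<Rightarrow> bool" where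
  "linear_operator D T \<longleftrightarrow> csubspace D \<and>
     (\<forall>x\<in>D. \<forall>y\<in>D. T (x + y) = T x + T y) \<and> (\<forall>a. \<forall>x\<in>D. T (scaleC a x) = scaleC a (T x))"

text \<open>Numerical range of \<open>T\<close> restricted to a set \<open>M\<close> (for \<open>M = D\<close> this is \<open>W(T)\<close>).\<close>
definition num_range :: "'a::complex_inner set \<Rightarrow> ('a \<Rightarrow> 'a) \<Rightarrow> complex set" where
  "num_range M T = {cinner (T x) x | x. x \<in> M \<and> norm x = 1}"

definition orth_in :: "'a::complex_inner \<Rightarrow> 'a set \<Rightarrow> 'a set" where
  "orth_in v D = {z \<in> D. cinner z v = 0}"

definition clin_indep2 :: "'a::complex_inner \<Rightarrow> 'a \<Rightarrow> bool" where
  "clin_indep2 x y \<longleftrightarrow> (\<forall>a b. scaleC a x + scaleC b y = 0 \<longrightarrow> a = 0 \<and> b = 0)"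

end

theory Submission
  imports Defs
begin

lemma scaleC_zero_left[simp]: "scaleC 0 (x::'a::complex_inner) = 0"
  using scaleC_of_real[of 0 x] by simp
lemma scaleC_zero_right[simp]: "scaleC a (0::'a::complex_inner) = 0"
  using scaleC_add_right[of a 0 0] by simp
lemma scaleC_minus1: "scaleC (-1) (x::'a::complex_inner) = - x"
  using scaleC_of_real[of "-1" x] by simp
lemma scaleC_minus_right: "scaleC a (- x) = - scaleC a (x::'a::complex_inner)"
  by (metis scaleC_minus1 scaleC_scaleC mult.commute)
lemma scaleC_minus_left: "scaleC (- a) x = - scaleC a (x::'a::complex_inner)"
  by (metis scaleC_minus1 scaleC_scaleC mult_minus1)
lemma scaleC_diff_right: "scaleC a (x - y) = scaleC a x - scaleC a (y::'a::complex_inner)"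
  by (metis diff_conv_add_uminus scaleC_add_right scaleC_minus_right)
lemma scaleC_diff_left: "scaleC (a - b) x = scaleC a x - scaleC b (x::'a::complex_inner)"
  by (metis diff_conv_add_uminus scaleC_add_left scaleC_minus_left)

lemma cinner_zero_left[simp]: "cinner 0 (x::'a::complex_inner) = 0"
  using cinner_add_left[of 0 0 x] by simp
lemma cinner_zero_right[simp]: "cinner (x::'a::complex_inner) 0 = 0"
  by (metis cinner_commute cinner_zero_left complex_cnj_zero)
lemma cinner_add_right: "cinner x (y + z) = cinner x y + cinner (x::'a::complex_inner) z"
  by (metis cinner_commute cinner_add_left complex_cnj_add)
lemma cinner_scaleC_right: "cinner x (scaleC a y) = cnj a * cinner (x::'a::complex_inner) y"
  by (metis cinner_commute cinner_scaleC_left complex_cnj_mult)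
lemma cinner_minus_left: "cinner (- x) y = - cinner x (y::'a::complex_inner)"
  by (metis cinner_scaleC_left mult_minus1 scaleC_minus1)
lemma cinner_minus_right: "cinner x (- y) = - cinner x (y::'a::complex_inner)"
  by (metis cinner_commute cinner_minus_left complex_cnj_minus)
lemma cinner_diff_left: "cinner (x - y) z = cinner x z - cinner y (z::'a::complex_inner)"
  by (metis diff_conv_add_uminus cinner_add_left cinner_minus_left)
lemma cinner_diff_right: "cinner x (y - z) = cinner x y - cinner x (z::'a::complex_inner)"
  by (metis diff_conv_add_uminus cinner_add_right cinner_minus_right)

lemma cinner_self_Im: "Im (cinner x (x::'a::complex_inner)) = 0"
proof -
  have "cnj (cinner x x) = cinner x x" using cinner_commute[of x x] by simp
  then have "Im (cnj (cinner x x)) = Im (cinner x x)" by simp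
  then show ?thesis by simp
qed

lemma cinner_self_real: "cinner x (x::'a::complex_inner) = complex_of_real ((norm x)^2)"
proof -
  have "(norm x)^2 = Re (cinner x x)" using norm_eq_sqrt_cinner[of x] cinner_ge_zero[of x] by simp
  then show ?thesis using cinner_self_Im[of x] by (simp add: complex_eq_iff)
qed

lemma norm_sq_cinner: "(norm x)^2 = Re (cinner x (x::'a::complex_inner))"
  using cinner_self_real[of x] by simp

lemma norm_scaleC: "norm (scaleC a x) = cmod a * norm (x::'a::complex_inner)"
proof -
  have "(norm (scaleC a x))^2 = Re (a * cnj a * cinner x x)"
    by (simp add: norm_sq_cinner cinner_scaleC_left cinner_scaleC_right mult.assoc cinner_self_Im)
  also have "... = (cmod a * norm x)^2"
    by (simp add: cinner_self_real complex_mult_cnj power_mult_distrib cmod_power2 del: of_real_power)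
  finally show ?thesis by (simp add: power2_eq_iff_nonneg)
qed

lemma cauchy_schwarz: "cmod (cinner x y) \<le> norm x * norm (y::'a::complex_inner)"
proof (cases "y = 0")
  case True then show ?thesis by simp
next
  case False
  define l where "l = cinner x y / cinner y y"
  have ny: "norm y > 0" using False by simp
  have yy: "cinner y y = complex_of_real ((norm y)^2)" by (rule cinner_self_real)
  have "0 \<le> Re (cinner (x - scaleC l y) (x - scaleC l y))" by (rule cinner_ge_zero)
  also have "cinner (x - scaleC l y) (x - scaleC l y) =
     cinner x x - cnj l * cinner x y - l * cinner y x + l * cnj l * cinner y y"
    by (simp add: cinner_diff_left cinner_diff_right cinner_scaleC_left cinner_scaleC_right algebra_simps)
  also have "... = cinner x x - cinner x y * cnj (cinner x y) / cinner y y"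
    using ny unfolding l_def yy
    by (subst cinner_commute[of y x]) (simp add: field_simps power2_eq_square)
  finally have "0 \<le> (norm x)^2 - (cmod (cinner x y))^2 / (norm y)^2"
    using ny by (simp add: cinner_self_real yy complex_mult_cnj del: of_real_power)
      (simp add: Re_divide cmod_power2)
  then have "(cmod (cinner x y))^2 \<le> (norm x * norm y)^2"
    using ny by (simp add: field_simps power_mult_distrib)
  then show ?thesis by (simp add: power2_le_iff_abs_le)
qed

lemma csubD:
  assumes "csubspace D"
  shows "0 \<in> D" "x \<in> D \<Longrightarrow> y \<in> D \<Longrightarrow> x + y \<in> D" "x \<in> D \<Longrightarrow> scaleC a x \<in> D"
  using assms unfolding csubspace_def by auto

lemma csub_minus: "csubspace D \<Longrightarrow> x \<in> D \<Longrightarrow> - x \<in> D"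
  using csubD(3)[of D x "-1"] by (simp add: scaleC_minus1)
lemma csub_diff: "csubspace D \<Longrightarrow> x \<in> D \<Longrightarrow> y \<in> D \<Longrightarrow> x - y \<in> D"
  using csubD(2)[of D x "-y"] csub_minus[of D y] by simp
lemma csub_scaleR: "csubspace D \<Longrightarrow> x \<in> D \<Longrightarrow> scaleR r x \<in> D"
  using csubD(3)[of D x "complex_of_real r"] by (simp add: scaleC_of_real)

lemma linD:
  assumes "linear_operator D T"
  shows "csubspace D" "x \<in> D \<Longrightarrow> y \<in> D \<Longrightarrow> T (x + y) = T x + T y"
    "x \<in> D \<Longrightarrow> T (scaleC a x) = scaleC a (T x)"
  using assms unfolding linear_operator_def by auto

lemma lin_zero: "linear_operator D T \<Longrightarrow> T 0 = 0"
proof -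
  assume a: "linear_operator D T"
  have "0 \<in> D" using csubD(1)[OF linD(1)[OF a]] .
  then show ?thesis using linD(3)[OF a, of 0 0] by simp
qed
lemma lin_minus: "linear_operator D T \<Longrightarrow> x \<in> D \<Longrightarrow> T (- x) = - T x"
  using linD(3)[of D T x "-1"] by (simp add: scaleC_minus1)
lemma lin_diff: "linear_operator D T \<Longrightarrow> x \<in> D \<Longrightarrow> y \<in> D \<Longrightarrow> T (x - y) = T x - T y"
  using linD(2)[of D T x "-y"] csub_minus[OF linD(1), of D T y] lin_minus[of D T y] by simp
lemma lin_scaleR: "linear_operator D T \<Longrightarrow> x \<in> D \<Longrightarrow> T (scaleR r x) = scaleR r (T x)"
  using linD(3)[of D T x "complex_of_real r"] by (simp add: scaleC_of_real)

lemma q_add: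
  assumes "linear_operator D T" "x \<in> D" "y \<in> D"
  shows "cinner (T (x + y)) (x + y) = cinner (T x) x + cinner (T x) y + cinner (T y) x + cinner (T y) y"
  using assms by (simp add: linD cinner_add_left cinner_add_right)

lemma q_scale:
  assumes "linear_operator D T" "x \<in> D"
  shows "cinner (T (scaleC a x)) (scaleC a x) = a * cnj a * cinner (T x) x"
  using assms by (simp add: linD cinner_scaleC_left cinner_scaleC_right)

lemma q_scaleR:
  assumes "linear_operator D T" "x \<in> D"
  shows "cinner (T (scaleR r x)) (scaleR r x) = complex_of_real (r^2) * cinner (T x) x"
  using q_scale[OF assms, of "complex_of_real r"] by (simp add: scaleC_of_real power2_eq_square)

lemma q_comb:
  assumes "linear_operator D T" "x \<in> D" "y \<in> D"
  shows "cinner (T (scaleC a x + scaleC b y)) (scaleC a x + scaleC b y) =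
    a * cnj a * cinner (T x) x + a * cnj b * cinner (T x) y + b * cnj a * cinner (T y) x + b * cnj b * cinner (T y) y"
  using assms by (simp add: linD csubD cinner_add_left cinner_add_right cinner_scaleC_left cinner_scaleC_right algebra_simps)

lemma cinner_comb:
  "cinner (scaleC a x + scaleC b y) (scaleC a x + scaleC b y) =
    a * cnj a * cinner x x + a * cnj b * cinner x y + b * cnj a * cinner y x + b * cnj b * cinner y (y::'a::complex_inner)"
  by (simp add: cinner_add_left cinner_add_right cinner_scaleC_left cinner_scaleC_right algebra_simps)

lemma q_bound:
  "cmod (cinner (T x) x) \<le> norm (T x) * norm (x::'a::complex_inner)"
  by (rule cauchy_schwarz)

declare scaleC_one[simp]

lemma G_scale:
  assumes "linear_operator D T" "x \<in> D"
  shows "cinner (T (scaleC k x)) (scaleC k x) - w * cinner (scaleC k x) (scaleC k x)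
       = k * cnj k * (cinner (T x) x - w * cinner x x)"
  using assms by (simp add: q_scale linD cinner_scaleC_left cinner_scaleC_right algebra_simps)

lemma num_range_convex:
  assumes lin: "linear_operator D T" and MD: "M \<subseteq> D" and Msub: "csubspace M"
  shows "convex (num_range M T)"
proof (rule convexI)
  fix w1 w2 and u v :: real
  assume w1: "w1 \<in> num_range M T" and w2: "w2 \<in> num_range M T" and u: "0 \<le> u" and v: "0 \<le> v"
    and uv: "u + v = 1"
  obtain z1 where z1: "z1 \<in> M" "norm z1 = 1" "w1 = cinner (T z1) z1"
    using w1 unfolding num_range_def by auto
  obtain z2 where z2: "z2 \<in> M" "norm z2 = 1" "w2 = cinner (T z2) z2"
    using w2 unfolding num_range_def by auto
  have z1D: "z1 \<in> D" and z2D: "z2 \<in> D" using z1 z2 MD by auto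
  have n11: "cinner z1 z1 = 1" and n22: "cinner z2 z2 = 1"
    using cinner_self_real[of z1] cinner_self_real[of z2] z1 z2 by auto
  show "u *\<^sub>R w1 + v *\<^sub>R w2 \<in> num_range M T"
  proof (cases "w1 = w2")
    case True
    then have "u *\<^sub>R w1 + v *\<^sub>R w2 = w1" using uv by (metis scaleR_add_left scaleR_one)
    then show ?thesis using w1 by simp
  next
    case False
    define d where "d = w2 - w1"
    have d0: "d \<noteq> 0" using False d_def by simp
    define X where "X = (cinner (T z1) z2 - w1 * cinner z1 z2) / d"
    define Y where "Y = (cinner (T z2) z1 - w1 * cinner z2 z1) / d"
    define Dl where "Dl = X - cnj Y"
    define mu where "mu = (if Dl = 0 then 1 else Dl / complex_of_real (cmod Dl))"
    have mu1: "mu * cnj mu = 1"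
    proof (cases "Dl = 0")
      case True then show ?thesis unfolding mu_def by simp
    next
      case False
      have "mu * cnj mu = (Dl * cnj Dl) / complex_of_real ((cmod Dl)^2)"
        unfolding mu_def using False by (simp add: power2_eq_square)
      also have "Dl * cnj Dl = complex_of_real ((cmod Dl)^2)" by (simp add: complex_mult_cnj cmod_power2)
      finally show ?thesis using False by simp
    qed
    have "Im (cnj mu * Dl) = 0"
      unfolding mu_def by (auto simp: complex_mult_cnj)
    then have ImS: "Im (cnj mu * X + mu * Y) = 0" unfolding Dl_def by (simp add: algebra_simps)
    define c where "c = Re (cnj mu * X + mu * Y)"
    have cS: "cnj mu * X + mu * Y = complex_of_real c" using ImS c_def by (simp add: complex_eq_iff)
    define zr where "zr r = scaleC (complex_of_real (1 - r)) z1 + scaleC (complex_of_real r * mu) z2" for r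
    define pn where "pn r = (1 - r) * r * c + r^2" for r
    have zrM: "zr r \<in> M" for r unfolding zr_def using Msub z1 z2 by (simp add: csubD)
    have zrD: "zr r \<in> D" for r using zrM MD by auto
    have Gz: "cinner (T (zr r)) (zr r) - w1 * cinner (zr r) (zr r) = d * complex_of_real (pn r)" for r
    proof -
      have "cinner (T (zr r)) (zr r) - w1 * cinner (zr r) (zr r) =
         d * ((1 - r) * r * (cnj mu * X + mu * Y) + r^2 * (mu * cnj mu))"
      proof -
        define a where "a = complex_of_real (1 - r)"
        define b where "b = complex_of_real r * mu"
        have ca: "cnj a = a" and cb: "cnj b = complex_of_real r * cnj mu" unfolding a_def b_def by simp_all
        have e1: "cinner (T z1) z1 - w1 * cinner z1 z1 = 0" using n11 z1(3) by simp
        have e2: "cinner (T z2) z2 - w1 * cinner z2 z2 = d" using n22 z2(3) d_def by simp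
        have e3: "cinner (T z1) z2 - w1 * cinner z1 z2 = d * X" using d0 X_def by simp
        have e4: "cinner (T z2) z1 - w1 * cinner z2 z1 = d * Y" using d0 Y_def by simp
        have "cinner (T (zr r)) (zr r) - w1 * cinner (zr r) (zr r) =
          a * cnj a * (cinner (T z1) z1 - w1 * cinner z1 z1) + a * cnj b * (cinner (T z1) z2 - w1 * cinner z1 z2)
          + b * cnj a * (cinner (T z2) z1 - w1 * cinner z2 z1) + b * cnj b * (cinner (T z2) z2 - w1 * cinner z2 z2)"
          unfolding zr_def q_comb[OF lin z1D z2D] cinner_comb a_def[symmetric] b_def[symmetric]
          by (simp add: algebra_simps)
        also have "... = a * cnj b * (d * X) + b * cnj a * (d * Y) + b * cnj b * d"
          unfolding e1 e2 e3 e4 by simp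
        also have "... = d * ((1 - r) * r * (cnj mu * X + mu * Y) + r^2 * (mu * cnj mu))"
          unfolding ca cb unfolding a_def b_def by (simp add: algebra_simps power2_eq_square)
        finally show ?thesis .
      qed
      then show ?thesis unfolding cS mu1 pn_def by simp
    qed
    have zr_ne: "zr r \<noteq> 0" if r: "0 \<le> r" "r \<le> 1" for r
    proof
      assume zr0: "zr r = 0"
      consider "r = 0" | "r = 1" | "0 < r" "r < 1" using r by linarith
      then show False
      proof cases
        case 1 then show False using zr0 z1 unfolding zr_def by simp
      next
        case 2 then have "scaleC mu z2 = 0" using zr0 unfolding zr_def by simp
        then have "norm (scaleC mu z2) = 0" by simp
        then show False using z2 mu1 by (simp add: norm_scaleC)
      next
        case 3
        define k where "k = - complex_of_real (1 - r) / (complex_of_real r * mu)"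
        have mu0: "mu \<noteq> 0" using mu1 by auto
        have "scaleC (complex_of_real r * mu) z2 = - scaleC (complex_of_real (1 - r)) z1"
          using zr0 unfolding zr_def by (simp add: eq_neg_iff_add_eq_0 add.commute)
        then have "scaleC (complex_of_real r * mu) z2 = scaleC (- complex_of_real (1 - r)) z1"
          by (simp only: scaleC_minus_left)
        then have "scaleC (1 / (complex_of_real r * mu)) (scaleC (complex_of_real r * mu) z2)
             = scaleC (1 / (complex_of_real r * mu)) (scaleC (- complex_of_real (1 - r)) z1)" by simp
        then have "scaleC (1 / (complex_of_real r * mu) * (complex_of_real r * mu)) z2
             = scaleC (1 / (complex_of_real r * mu) * (- complex_of_real (1 - r))) z1"
          by (simp only: scaleC_scaleC)
        moreover have "1 / (complex_of_real r * mu) * (complex_of_real r * mu) = 1" using 3 mu0 by simp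
        moreover have "1 / (complex_of_real r * mu) * (- complex_of_real (1 - r)) = k" unfolding k_def by simp
        ultimately have z2k: "z2 = scaleC k z1" by simp
        have "cinner (T z2) z2 - w1 * cinner z2 z2 = k * cnj k * (cinner (T z1) z1 - w1 * cinner z1 z1)"
          unfolding z2k by (rule G_scale[OF lin z1D])
        then have "d = 0" using n11 n22 z1(3) z2(3) unfolding d_def by simp
        then show False using d0 by simp
      qed
    qed
    have zrR: "zr r = scaleR (1 - r) z1 + scaleR r (scaleC mu z2)" for r
      unfolding zr_def by (simp add: scaleC_of_real[symmetric] scaleC_scaleC)
    define ph where "ph r = pn r / (norm (zr r))^2" for r
    have cont: "continuous_on {0..1} ph"
    proof -
      have cz: "continuous_on {0..1} zr" unfolding zrR[abs_def] by (intro continuous_intros)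
      have cn: "continuous_on {0..1} (\<lambda>r. (norm (zr r))^2)"
        by (intro continuous_intros cz)
      have cp: "continuous_on {0..1} pn" unfolding pn_def[abs_def] by (intro continuous_intros)
      have nz: "\<forall>r\<in>{0..1}. (norm (zr r))^2 \<noteq> 0" using zr_ne by simp
      show ?thesis unfolding ph_def[abs_def] by (rule continuous_on_divide[OF cp cn nz])
    qed
    have ph0: "ph 0 = 0" unfolding ph_def pn_def by simp
    have ph1: "ph 1 = 1"
    proof -
      have "mu * cnj mu = complex_of_real ((cmod mu)^2)" by (simp add: complex_mult_cnj cmod_power2)
      then have "(cmod mu)^2 = 1" using mu1 by (metis of_real_eq_1_iff)
      then have cm: "cmod mu = 1" using norm_ge_zero[of mu] by (auto simp: power2_eq_1_iff)
      have "norm (zr 1) = 1" unfolding zr_def using z2 cm by (simp add: norm_scaleC)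
      then show ?thesis unfolding ph_def pn_def by simp
    qed
    obtain r where r: "0 \<le> r" "r \<le> 1" "ph r = v"
      using IVT'[of ph 0 v 1] cont ph0 ph1 v uv u by auto
    define nz where "nz = norm (zr r)"
    have nz0: "nz > 0" using zr_ne[OF r(1,2)] nz_def by simp
    define z where "z = scaleR (1 / nz) (zr r)"
    have zM: "z \<in> M" unfolding z_def using zrM csub_scaleR Msub by blast
    have zn: "norm z = 1" unfolding z_def nz_def using nz0 nz_def by simp
    have zz: "cinner (zr r) (zr r) = complex_of_real (nz^2)" using cinner_self_real nz_def by blast
    have "cinner (T z) z = complex_of_real ((1/nz)^2) * cinner (T (zr r)) (zr r)"
      unfolding z_def by (rule q_scaleR[OF lin zrD])
    also have "cinner (T (zr r)) (zr r) = w1 * complex_of_real (nz^2) + d * complex_of_real (pn r)"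
      using Gz[of r] zz by (simp add: algebra_simps)
    also have "pn r = v * nz^2" using r(3) nz0 unfolding ph_def nz_def by (simp add: field_simps)
    finally have h: "cinner (T z) z = complex_of_real ((1/nz)^2) * (w1 * complex_of_real (nz^2) + d * complex_of_real (v * nz^2))" .
    have k: "complex_of_real ((1/nz)^2) * complex_of_real (nz^2) = 1"
      using nz0 by (simp add: power_one_over flip: of_real_mult)
    have "cinner (T z) z = w1 * (complex_of_real ((1/nz)^2) * complex_of_real (nz^2))
       + d * complex_of_real v * (complex_of_real ((1/nz)^2) * complex_of_real (nz^2))"
      unfolding h by (simp add: algebra_simps)
    then have "cinner (T z) z = w1 + d * v" unfolding k by simp
    also have "... = u *\<^sub>R w1 + v *\<^sub>R w2"
    proof -
      have e: "complex_of_real u + complex_of_real v = 1" using uv by (metis of_real_1 of_real_add)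
      have "w1 = w1 * complex_of_real u + w1 * complex_of_real v"
        by (metis distrib_left e mult.right_neutral)
      then show ?thesis unfolding d_def by (simp add: scaleR_conv_of_real algebra_simps)
    qed
    finally have fin: "cinner (T z) z = u *\<^sub>R w1 + v *\<^sub>R w2" .
    show ?thesis unfolding num_range_def
      by (rule CollectI, rule exI[of _ z]) (use zM zn fin in simp)
  qed
qed

lemma half_plane:
  assumes lin: "linear_operator D T" and MD: "M \<subseteq> D" and Msub: "csubspace M"
    and ne: "num_range M T \<noteq> UNIV"
  shows "\<exists>\<omega> C. cmod \<omega> = 1 \<and> C \<ge> 0 \<and> (\<forall>m\<in>M. - C * (norm m)^2 \<le> Re (\<omega> * cinner (T m) m))"
proof -
  let ?W = "num_range M T"
  obtain l0 where l0: "l0 \<notin> ?W" using ne by auto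
  have cv: "convex ((\<lambda>b. b - l0) ` ?W)"
    by (rule convex_translation_subtract[OF num_range_convex[OF lin MD Msub]])
  have z: "0 \<notin> (\<lambda>b. b - l0) ` ?W" using l0 by auto
  obtain a where a: "a \<noteq> 0" "\<forall>x\<in>(\<lambda>b. b - l0) ` ?W. 0 \<le> inner a x"
    using separating_hyperplane_set_0[OF cv z] by blast
  define \<omega> where "\<omega> = cnj a / complex_of_real (cmod a)"
  define c0 where "c0 = Re (cnj a * l0) / cmod a"
  have ca: "cmod a > 0" using a by simp
  have om: "cmod \<omega> = 1" unfolding \<omega>_def using ca by (simp add: norm_divide)
  have W: "c0 \<le> Re (\<omega> * w)" if "w \<in> ?W" for w
  proof -
    have "0 \<le> inner a (w - l0)" using a(2) that by auto
    also have "inner a (w - l0) = Re (cnj a * w) - Re (cnj a * l0)"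
      unfolding inner_complex_def by (simp add: algebra_simps)
    finally have "Re (cnj a * l0) / cmod a \<le> Re (cnj a * w) / cmod a"
      using ca by (simp add: divide_right_mono)
    then show ?thesis unfolding c0_def \<omega>_def by (simp add: Re_divide_of_real)
  qed
  have "\<forall>m\<in>M. - \<bar>c0\<bar> * (norm m)^2 \<le> Re (\<omega> * cinner (T m) m)"
  proof
    fix m assume mM: "m \<in> M"
    have mD: "m \<in> D" using mM MD by auto
    show "- \<bar>c0\<bar> * (norm m)^2 \<le> Re (\<omega> * cinner (T m) m)"
    proof (cases "m = 0")
      case True then show ?thesis using lin_zero[OF lin] by simp
    next
      case False
      define m' where "m' = scaleR (1 / norm m) m"
      have "m' \<in> M" unfolding m'_def using mM Msub csub_scaleR by blast
      moreover have "norm m' = 1" unfolding m'_def using False by simp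
      ultimately have "cinner (T m') m' \<in> ?W" unfolding num_range_def by auto
      then have "c0 \<le> Re (\<omega> * cinner (T m') m')" by (rule W)
      also have "cinner (T m') m' = complex_of_real ((1 / norm m)^2) * cinner (T m) m"
        unfolding m'_def by (rule q_scaleR[OF lin mD])
      finally have "c0 \<le> (1 / norm m)^2 * Re (\<omega> * cinner (T m) m)"
        by (simp add: algebra_simps)
      then have "c0 * (norm m)^2 \<le> Re (\<omega> * cinner (T m) m)"
        using False by (simp add: field_simps)
      moreover have "- \<bar>c0\<bar> * (norm m)^2 \<le> c0 * (norm m)^2"
        using mult_right_mono[of "- \<bar>c0\<bar>" c0 "(norm m)^2"] by simp
      ultimately show ?thesis by linarith
    qed
  qed
  then show ?thesis using om by (intro exI[of _ \<omega>] exI[of _ "\<bar>c0\<bar>"]) auto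
qed

lemma alg_A:
  fixes Qn f h Qu a w1 w2 :: complex
  assumes w1: "w1 \<noteq> 0"
  defines "a' \<equiv> cnj w2 * a / cnj w1"
  defines "F \<equiv> \<lambda>z. Qn + cnj z * f + z * h + z * cnj z * Qu"
  shows "(w1 + w2) * F a = w1 * F (2 * a) / 2 + w1 * F (2 * a') / 2 + w2 * Qn
     + w2 * a * h - w1 * a' * h + a * cnj a * (w1 + w2) * Qu - 2 * (w1 * a * cnj a * Qu)
     - 2 * (w1 * a' * cnj a' * Qu)"
proof -
  have ca: "cnj a' = w2 * cnj a / w1" unfolding a'_def by simp
  show ?thesis unfolding F_def using w1 by (simp add: ca field_simps)
qed

lemma q_lin1:
  assumes lin: "linear_operator D T" and "n \<in> D" "u \<in> D"
  shows "cinner (T (n + scaleC a u)) (n + scaleC a u) =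
    cinner (T n) n + cnj a * cinner (T n) u + a * cinner (T u) n + a * cnj a * cinner (T u) u"
  using q_comb[OF assms, of 1 a] by simp

lemma norm_sum_sq: "(norm (x + y :: 'a::real_normed_vector))^2 \<le> 2 * (norm x)^2 + 2 * (norm y)^2"
proof -
  have "norm (x + y) \<le> norm x + norm y" by (rule norm_triangle_ineq)
  then have "(norm (x + y))^2 \<le> (norm x + norm y)^2" by (simp add: power_mono)
  also have "... \<le> 2 * (norm x)^2 + 2 * (norm y)^2"
  proof -
    have e: "(norm x + norm y)^2 = (norm x)^2 + (norm y)^2 + 2 * (norm x * norm y)"
      by (simp add: power2_eq_square algebra_simps)
    have "0 \<le> (norm x - norm y)^2" by simp
    then have "2 * (norm x * norm y) \<le> (norm x)^2 + (norm y)^2"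
      by (simp add: power2_eq_square algebra_simps)
    then show ?thesis unfolding e by linarith
  qed
  finally show ?thesis .
qed


lemma Re_add': "Re (x + y) = Re x + Re y" by simp
lemma Re_diff': "Re (x - y) = Re x - Re y" by simp
lemma Re_2mult: "Re (2 * z) = 2 * Re z" by simp
lemma Re_div2: "Re (z / 2) = Re z / 2" by simp

lemma Re_lower: "- cmod z \<le> Re z"
  using abs_Re_le_cmod[of z] by linarith

lemma amgm: "(x::real) * y \<le> (x^2 + y^2) / 2"
proof -
  have "0 \<le> (x - y)^2" by simp
  then show ?thesis by (simp add: power2_eq_square algebra_simps)
qed

lemma stepA:
  assumes lin: "linear_operator D T" and ND: "N \<subseteq> D" and uD: "u \<in> D"
    and om1: "cmod w1 = 1" and om2: "cmod w2 = 1" and C1: "0 \<le> C1" and C2: "0 \<le> C2"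
    and A1: "\<forall>n\<in>N. \<forall>a. - C1 * (norm (n + scaleC a u))^2 \<le> Re (w1 * cinner (T (n + scaleC a u)) (n + scaleC a u))"
    and A2: "\<forall>n\<in>N. - C2 * (norm n)^2 \<le> Re (w2 * cinner (T n) n)"
  shows "\<exists>K\<ge>0. \<forall>n\<in>N. \<forall>a. - K * ((norm n)^2 + (cmod a)^2) \<le> Re ((w1 + w2) * cinner (T (n + scaleC a u)) (n + scaleC a u))"
proof -
  define tu where "tu = norm (T u)"
  define qu where "qu = cmod (cinner (T u) u)"
  define nu where "nu = (norm u)^2"
  define K where "K = C1 * (2 + 8 * nu) + C2 + 2 * tu + 6 * qu"
  have K0: "K \<ge> 0" unfolding K_def tu_def qu_def nu_def using C1 C2 by simp
  have w10: "w1 \<noteq> 0" using om1 by auto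
  have main: "- K * ((norm n)^2 + (cmod a)^2) \<le> Re ((w1 + w2) * cinner (T (n + scaleC a u)) (n + scaleC a u))"
    if nN: "n \<in> N" for n a
  proof -
    have nD: "n \<in> D" using nN ND by auto
    define S where "S = (norm n)^2 + (cmod a)^2"
    define a' where "a' = cnj w2 * a / cnj w1"
    have ca': "cmod a' = cmod a" unfolding a'_def using om1 om2 by (simp add: norm_divide norm_mult)
    define Qn where "Qn = cinner (T n) n"
    define f where "f = cinner (T n) u"
    define h where "h = cinner (T u) n"
    define Qu where "Qu = cinner (T u) u"
    define F where "F = (\<lambda>z. Qn + cnj z * f + z * h + z * cnj z * Qu)"
    have FF: "cinner (T (n + scaleC z u)) (n + scaleC z u) = F z" for z
      unfolding F_def Qn_def f_def h_def Qu_def by (rule q_lin1[OF lin nD uD])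
    have id: "(w1 + w2) * F a = w1 * F (2 * a) / 2 + w1 * F (2 * a') / 2 + w2 * Qn
     + w2 * a * h - w1 * a' * h + a * cnj a * (w1 + w2) * Qu - 2 * (w1 * a * cnj a * Qu)
     - 2 * (w1 * a' * cnj a' * Qu)"
      unfolding F_def a'_def by (rule alg_A[OF w10])
    have S0: "0 \<le> S" unfolding S_def by simp
    have nu0: "0 \<le> nu" unfolding nu_def by simp
    have nrm: "(norm (n + scaleC z u))^2 \<le> (2 + 8 * nu) * S" if z: "cmod z = 2 * cmod a" for z
    proof -
      have "(norm (n + scaleC z u))^2 \<le> 2 * (norm n)^2 + 2 * (norm (scaleC z u))^2" by (rule norm_sum_sq)
      also have "(norm (scaleC z u))^2 = 4 * ((cmod a)^2 * nu)" unfolding nu_def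
        by (simp add: norm_scaleC z power_mult_distrib)
      also have "2 * (norm n)^2 + 2 * (4 * ((cmod a)^2 * nu)) \<le> (2 + 8 * nu) * S"
      proof -
        have e: "(2 + 8 * nu) * S = 2 * (norm n)^2 + 2 * (cmod a)^2 + 8 * (nu * (norm n)^2) + 8 * ((cmod a)^2 * nu)"
          unfolding S_def by (simp add: algebra_simps)
        have "0 \<le> nu * (norm n)^2" using nu0 by simp
        then show ?thesis unfolding e by simp
      qed
      finally show ?thesis .
    qed
    have b1: "- (C1 * (2 + 8 * nu) * S) \<le> Re (w1 * F (2 * a))"
    proof -
      have "- C1 * (norm (n + scaleC (2 * a) u))^2 \<le> Re (w1 * F (2 * a))" using A1 nN FF by metis
      moreover have "C1 * (norm (n + scaleC (2 * a) u))^2 \<le> C1 * ((2 + 8 * nu) * S)"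
        by (rule mult_left_mono[OF nrm C1]) (simp add: norm_mult)
      ultimately show ?thesis by (simp add: mult.assoc)
    qed
    have b2: "- (C1 * (2 + 8 * nu) * S) \<le> Re (w1 * F (2 * a'))"
    proof -
      have "- C1 * (norm (n + scaleC (2 * a') u))^2 \<le> Re (w1 * F (2 * a'))" using A1 nN FF by metis
      moreover have "C1 * (norm (n + scaleC (2 * a') u))^2 \<le> C1 * ((2 + 8 * nu) * S)"
        by (rule mult_left_mono[OF nrm C1]) (simp add: norm_mult ca')
      ultimately show ?thesis by (simp add: mult.assoc)
    qed
    have b3: "- (C2 * S) \<le> Re (w2 * Qn)"
    proof -
      have "- C2 * (norm n)^2 \<le> Re (w2 * Qn)" using A2 nN unfolding Qn_def by blast
      moreover have "C2 * (norm n)^2 \<le> C2 * S" unfolding S_def using C2 by (simp add: mult_left_mono)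
      ultimately show ?thesis by simp
    qed
    have hb: "cmod h \<le> tu * norm n" unfolding h_def tu_def by (rule cauchy_schwarz)
    have ah: "cmod a * cmod h \<le> tu * S"
    proof -
      have "cmod a * cmod h \<le> cmod a * (tu * norm n)" by (rule mult_left_mono[OF hb]) simp
      also have "... = tu * (cmod a * norm n)" by simp
      also have "... \<le> tu * (((cmod a)^2 + (norm n)^2) / 2)"
        by (rule mult_left_mono[OF amgm]) (simp add: tu_def)
      also have "... \<le> tu * S" unfolding S_def by (rule mult_left_mono) (simp_all add: tu_def)
      finally show ?thesis .
    qed
    have b4: "- (tu * S) \<le> Re (w2 * a * h)"
      using Re_lower[of "w2 * a * h"] ah om2 by (simp add: norm_mult)
    have b5: "- (tu * S) \<le> - Re (w1 * a' * h)"
      using Re_lower[of "- (w1 * a' * h)"] ah om1 ca' by (simp add: norm_mult)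
    have qa: "(cmod a)^2 * qu \<le> qu * S" unfolding S_def qu_def by (simp add: algebra_simps)
    have b6: "- (2 * qu * S) \<le> Re (a * cnj a * (w1 + w2) * Qu)"
    proof -
      have "cmod (w1 + w2) \<le> 2" using norm_triangle_ineq[of w1 w2] om1 om2 by simp
      then have "cmod (a * cnj a * (w1 + w2) * Qu) \<le> (cmod a)^2 * 2 * qu"
        unfolding qu_def Qu_def by (simp add: norm_mult power2_eq_square mult_left_mono mult_right_mono)
      then show ?thesis using Re_lower[of "a * cnj a * (w1 + w2) * Qu"] qa by linarith
    qed
    have b7: "- (2 * qu * S) \<le> - 2 * Re (w1 * a * cnj a * Qu)"
    proof -
      have "cmod (w1 * a * cnj a * Qu) = (cmod a)^2 * qu"
        unfolding qu_def Qu_def using om1 by (simp add: norm_mult power2_eq_square)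
      then show ?thesis using Re_lower[of "- (w1 * a * cnj a * Qu)"] qa by simp
    qed
    have b8: "- (2 * qu * S) \<le> - 2 * Re (w1 * a' * cnj a' * Qu)"
    proof -
      have "cmod (w1 * a' * cnj a' * Qu) = (cmod a)^2 * qu"
        unfolding qu_def Qu_def using om1 ca' by (simp add: norm_mult power2_eq_square)
      then show ?thesis using Re_lower[of "- (w1 * a' * cnj a' * Qu)"] qa by simp
    qed
    have ReId: "Re ((w1 + w2) * F a) = Re (w1 * F (2 * a)) / 2 + Re (w1 * F (2 * a')) / 2 + Re (w2 * Qn)
     + Re (w2 * a * h) - Re (w1 * a' * h) + Re (a * cnj a * (w1 + w2) * Qu) - 2 * Re (w1 * a * cnj a * Qu)
     - 2 * Re (w1 * a' * cnj a' * Qu)"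
      unfolding id by (simp only: Re_add' Re_diff' Re_2mult Re_div2)
    have KS: "K * S = C1 * (2 + 8 * nu) * S + C2 * S + 2 * (tu * S) + 3 * (2 * qu * S)"
      unfolding K_def by (simp add: algebra_simps)
    have "- (K * S) \<le> Re ((w1 + w2) * F a)"
      unfolding ReId KS using b1 b2 b3 b4 b5 b6 b7 b8 by linarith
    then show ?thesis unfolding S_def FF by simp
  qed
  show ?thesis using K0 main by blast
qed

lemma qid:
  assumes lin: "linear_operator D T" and D: "n \<in> D" "x \<in> D" "y \<in> D"
  shows "2 * cinner (T (n + scaleC a x + scaleC b y)) (n + scaleC a x + scaleC b y)
     + 4 * cinner (T (scaleC a x)) (scaleC a x) + 4 * cinner (T (scaleC b y)) (scaleC b y)
   = cinner (T (n + scaleC (2 * a) x)) (n + scaleC (2 * a) x) + cinner (T (n + scaleC (2 * b) y)) (n + scaleC (2 * b) y)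
     + 2 * cinner (T (scaleC a x + scaleC b y)) (scaleC a x + scaleC b y)"
proof -
  have cs: "csubspace D" using linD(1)[OF lin] .
  note mem = csubD(2)[OF cs] csubD(3)[OF cs]
  show ?thesis using D
    by (simp add: linD[OF lin] mem cinner_add_left cinner_add_right cinner_scaleC_left cinner_scaleC_right)
       (simp add: algebra_simps)
qed

lemma prod_le:
  fixes x y A B R :: real
  assumes "0 \<le> x" "x \<le> A * R" "0 \<le> y" "y \<le> B * R"
  shows "x * y \<le> A * B * R^2"
proof -
  have "x * y \<le> (A * R) * (B * R)" by (rule mult_mono) (use assms in auto)
  then show ?thesis by (simp add: power2_eq_square algebra_simps)
qed

lemma lin_comb:
  fixes X P Q Y1 Y2 S b :: complex
  assumes h: "2 * X + 4 * P + 4 * Q = Y1 + Y2 + 2 * S"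
  shows "b * X = b * Y1 / 2 + b * Y2 / 2 + b * S - 2 * (b * P) - 2 * (b * Q)"
proof -
  have "X = (Y1 + Y2 + 2 * S - 4 * P - 4 * Q) / 2" using h by (simp add: field_simps)
  then have "b * X = b * ((Y1 + Y2 + 2 * S - 4 * P - 4 * Q) / 2)" by simp
  also have "... = b * Y1 / 2 + b * Y2 / 2 + b * S - 2 * (b * P) - 2 * (b * Q)" by (simp add: field_simps)
  finally show ?thesis .
qed

lemma inM:
  assumes "csubspace D" "n \<in> D" "e1 \<in> D" "e2 \<in> D" "cinner n e1 = 0" "cinner n e2 = 0"
    "cinner e1 e1 = 1" "cinner e2 e2 = 1" "cinner e1 e2 = 0" "cinner e2 e1 = 0"
  shows "n + scaleC a (e1 - scaleC (cnj s) e2) \<in> orth_in (e2 + scaleC s e1) D"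
proof -
  have "n + scaleC a (e1 - scaleC (cnj s) e2) \<in> D"
    using assms by (simp add: csubD csub_diff)
  moreover have "cinner (n + scaleC a (e1 - scaleC (cnj s) e2)) (e2 + scaleC s e1) = 0"
    using assms by (simp add: cinner_add_left cinner_add_right cinner_diff_left cinner_scaleC_left cinner_scaleC_right)
  ultimately show ?thesis unfolding orth_in_def by simp
qed

lemma core:
  assumes lin: "linear_operator D T" and W: "num_range D T = UNIV"
    and e1D: "e1 \<in> D" and e2D: "e2 \<in> D"
    and o11: "cinner e1 e1 = 1" and o22: "cinner e2 e2 = 1" and o12: "cinner e1 e2 = 0"
    and s12: "s1 \<noteq> s2"
    and om1: "cmod w1 = 1" and om2: "cmod w2 = 1" and ws: "w1 + w2 \<noteq> 0"
    and C1: "0 \<le> C1" and C2: "0 \<le> C2"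
    and H1: "\<forall>m\<in>orth_in (e2 + scaleC s1 e1) D. - C1 * (norm m)^2 \<le> Re (w1 * cinner (T m) m)"
    and H2: "\<forall>m\<in>orth_in (e2 + scaleC s2 e1) D. - C2 * (norm m)^2 \<le> Re (w2 * cinner (T m) m)"
  shows False
proof -
  have cs: "csubspace D" using linD(1)[OF lin] .
  have o21: "cinner e2 e1 = 0" using cinner_commute[of e2 e1] o12 by simp
  define N where "N = {n \<in> D. cinner n e1 = 0 \<and> cinner n e2 = 0}"
  have ND: "N \<subseteq> D" unfolding N_def by auto
  define u1 where "u1 = e1 - scaleC (cnj s1) e2"
  define u2 where "u2 = e1 - scaleC (cnj s2) e2"
  have u1D: "u1 \<in> D" unfolding u1_def using cs e1D e2D by (simp add: csubD csub_diff)
  have u2D: "u2 \<in> D" unfolding u2_def using cs e1D e2D by (simp add: csubD csub_diff)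
  have inM': "n + scaleC a (e1 - scaleC (cnj s) e2) \<in> orth_in (e2 + scaleC s e1) D" if "n \<in> N" for n a s
    using that unfolding N_def by (intro inM[OF cs _ e1D e2D _ _ o11 o22 o12 o21]) auto
  have nM: "n \<in> orth_in (e2 + scaleC s e1) D" if "n \<in> N" for n s
    using inM'[OF that, of 0 s] by simp
  obtain K1 where K1: "K1 \<ge> 0" "\<forall>n\<in>N. \<forall>a. - K1 * ((norm n)^2 + (cmod a)^2) \<le> Re ((w1 + w2) * cinner (T (n + scaleC a u1)) (n + scaleC a u1))"
    using stepA[OF lin ND u1D om1 om2 C1 C2] H1 H2 inM' nM unfolding u1_def by blast
  obtain K2 where K2: "K2 \<ge> 0" "\<forall>n\<in>N. \<forall>a. - K2 * ((norm n)^2 + (cmod a)^2) \<le> Re ((w2 + w1) * cinner (T (n + scaleC a u2)) (n + scaleC a u2))"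
    using stepA[OF lin ND u2D om2 om1 C2 C1] H1 H2 inM' nM unfolding u2_def by blast
  define \<beta> where "\<beta> = w1 + w2"
  define k1 where "k1 = (1 + cmod s2) / cmod (cnj s2 - cnj s1)"
  define k2 where "k2 = 1 + k1"
  have sd: "cnj s2 - cnj s1 \<noteq> 0" using s12 by (metis complex_cnj_cancel_iff eq_iff_diff_eq_0)
  have k10: "0 \<le> k1" unfolding k1_def by simp
  define A where "A = norm (T u1)"
  define B where "B = norm (T u2)"
  define U1 where "U1 = norm u1"
  define U2 where "U2 = norm u2"
  define Kf where "Kf = (K1 * (9 + 4 * k1^2) + K2 * (9 + 4 * k2^2)) / 2
      + 2 * ((k1 * A + k2 * B) * (k1 * U1 + k2 * U2)) + 4 * (k1^2 * A * U1) + 4 * (k2^2 * B * U2)"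
  have bound: "- Kf * (norm z)^2 \<le> Re (\<beta> * cinner (T z) z)" if zD: "z \<in> D" for z
  proof -
    define R where "R = norm z"
    have R0: "0 \<le> R" unfolding R_def by simp
    define a where "a = cinner z e1"
    define b where "b = cinner z e2"
    have ne1: "norm e1 = 1" using norm_sq_cinner[of e1] o11 norm_ge_zero[of e1] by (auto simp: power2_eq_1_iff)
    have ne2: "norm e2 = 1" using norm_sq_cinner[of e2] o22 norm_ge_zero[of e2] by (auto simp: power2_eq_1_iff)
    have ab: "cmod a \<le> R" "cmod b \<le> R" unfolding a_def b_def R_def
      using cauchy_schwarz[of z e1] cauchy_schwarz[of z e2] ne1 ne2 by auto
    define n where "n = z - scaleC a e1 - scaleC b e2"
    have nD: "n \<in> D" unfolding n_def using cs zD e1D e2D by (simp add: csubD csub_diff)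
    have nN: "n \<in> N" unfolding N_def n_def a_def b_def using nD[unfolded n_def a_def b_def] o11 o22 o12 o21
      by (simp add: cinner_diff_left cinner_scaleC_left)
    have nR: "norm n \<le> 3 * R"
    proof -
      have "norm n \<le> norm z + norm (scaleC a e1) + norm (scaleC b e2)" unfolding n_def
        using order_trans[OF norm_triangle_ineq4 add_right_mono[OF norm_triangle_ineq4], of z "scaleC a e1" "scaleC b e2"] by simp
      then show ?thesis using ab ne1 ne2 unfolding R_def by (simp add: norm_scaleC)
    qed
    define \<alpha>1 where "\<alpha>1 = (b + cnj s2 * a) / (cnj s2 - cnj s1)"
    define \<alpha>2 where "\<alpha>2 = a - \<alpha>1"
    have al1: "cmod \<alpha>1 \<le> k1 * R"
    proof -
      have "cmod (b + cnj s2 * a) \<le> cmod b + cmod s2 * cmod a" using norm_triangle_ineq[of b "cnj s2 * a"] by (simp add: norm_mult)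
      also have "... \<le> R + cmod s2 * R" using ab by (simp add: mult_left_mono add_mono)
      finally have "cmod (b + cnj s2 * a) \<le> (1 + cmod s2) * R" by (simp add: algebra_simps)
      then show ?thesis unfolding \<alpha>1_def k1_def using sd by (simp add: norm_divide divide_right_mono)
    qed
    have al2: "cmod \<alpha>2 \<le> k2 * R"
    proof -
      have "cmod \<alpha>2 \<le> cmod a + cmod \<alpha>1" unfolding \<alpha>2_def by (rule norm_triangle_ineq4)
      then show ?thesis unfolding k2_def using ab al1 by (simp add: algebra_simps)
    qed
    have decomp: "z = n + scaleC \<alpha>1 u1 + scaleC \<alpha>2 u2"
    proof -
      have c1: "\<alpha>1 + \<alpha>2 = a" unfolding \<alpha>2_def by simp
      have c2a: "\<alpha>1 * (cnj s2 - cnj s1) = b + cnj s2 * a" unfolding \<alpha>1_def using sd by simp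
      have c2b: "\<alpha>1 * cnj s1 + \<alpha>2 * cnj s2 = a * cnj s2 - \<alpha>1 * (cnj s2 - cnj s1)"
        unfolding \<alpha>2_def by (simp add: algebra_simps)
      have c2: "\<alpha>1 * cnj s1 + \<alpha>2 * cnj s2 = - b" unfolding c2b c2a by simp
      have "scaleC \<alpha>1 u1 + scaleC \<alpha>2 u2 = scaleC (\<alpha>1 + \<alpha>2) e1 - scaleC (\<alpha>1 * cnj s1 + \<alpha>2 * cnj s2) e2"
        unfolding u1_def u2_def by (simp add: scaleC_diff_right scaleC_scaleC scaleC_add_left algebra_simps)
      also have "... = scaleC a e1 + scaleC b e2" unfolding c1 c2 by (simp add: scaleC_minus_left)
      finally have h: "scaleC \<alpha>1 u1 + scaleC \<alpha>2 u2 = scaleC a e1 + scaleC b e2" .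
      have "n + scaleC \<alpha>1 u1 + scaleC \<alpha>2 u2 = n + (scaleC a e1 + scaleC b e2)"
        using h by (simp add: add.assoc)
      also have "... = z" unfolding n_def by (simp add: algebra_simps)
      finally show ?thesis by simp
    qed
    define p where "p = scaleC \<alpha>1 u1"
    define r where "r = scaleC \<alpha>2 u2"
    have pD: "p \<in> D" and rD: "r \<in> D" unfolding p_def r_def using cs u1D u2D by (simp_all add: csubD)
    have id: "2 * cinner (T z) z + 4 * cinner (T p) p + 4 * cinner (T r) r
      = cinner (T (n + scaleC (2 * \<alpha>1) u1)) (n + scaleC (2 * \<alpha>1) u1) + cinner (T (n + scaleC (2 * \<alpha>2) u2)) (n + scaleC (2 * \<alpha>2) u2)
        + 2 * cinner (T (p + r)) (p + r)"
      unfolding decomp p_def r_def by (rule qid[OF lin nD u1D u2D])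
    have ReId: "Re (\<beta> * cinner (T z) z) = Re (\<beta> * cinner (T (n + scaleC (2 * \<alpha>1) u1)) (n + scaleC (2 * \<alpha>1) u1)) / 2
       + Re (\<beta> * cinner (T (n + scaleC (2 * \<alpha>2) u2)) (n + scaleC (2 * \<alpha>2) u2)) / 2
       + Re (\<beta> * cinner (T (p + r)) (p + r)) - 2 * Re (\<beta> * cinner (T p) p) - 2 * Re (\<beta> * cinner (T r) r)"
    proof -
      have "\<beta> * cinner (T z) z = (\<beta> * cinner (T (n + scaleC (2 * \<alpha>1) u1)) (n + scaleC (2 * \<alpha>1) u1)) / 2
       + (\<beta> * cinner (T (n + scaleC (2 * \<alpha>2) u2)) (n + scaleC (2 * \<alpha>2) u2)) / 2
       + \<beta> * cinner (T (p + r)) (p + r) - 2 * (\<beta> * cinner (T p) p) - 2 * (\<beta> * cinner (T r) r)"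
        by (rule lin_comb[OF id])
      then show ?thesis by (simp only: Re_add' Re_diff' Re_2mult Re_div2)
    qed
    have bb: "cmod \<beta> \<le> 2" unfolding \<beta>_def using norm_triangle_ineq[of w1 w2] om1 om2 by simp
    have Rb: "- (2 * c) \<le> Re (\<beta> * x)" if "cmod x \<le> c" for x c
    proof -
      have "cmod (\<beta> * x) \<le> 2 * c" unfolding norm_mult
        using mult_mono[OF bb that] by simp
      then show ?thesis using Re_lower[of "\<beta> * x"] by linarith
    qed
    have t1: "- (K1 * (9 + 4 * k1^2) * R^2) \<le> Re (\<beta> * cinner (T (n + scaleC (2 * \<alpha>1) u1)) (n + scaleC (2 * \<alpha>1) u1))"
    proof -
      have "- K1 * ((norm n)^2 + (cmod (2 * \<alpha>1))^2) \<le> Re (\<beta> * cinner (T (n + scaleC (2 * \<alpha>1) u1)) (n + scaleC (2 * \<alpha>1) u1))"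
        using K1(2) nN unfolding \<beta>_def by blast
      moreover have "(norm n)^2 + (cmod (2 * \<alpha>1))^2 \<le> (9 + 4 * k1^2) * R^2"
      proof -
        have "(norm n)^2 \<le> (3 * R)^2" using power_mono[OF nR norm_ge_zero] .
        moreover have "(cmod \<alpha>1)^2 \<le> (k1 * R)^2" using power_mono[OF al1 norm_ge_zero] .
        ultimately show ?thesis by (simp add: norm_mult power_mult_distrib algebra_simps)
      qed
      ultimately show ?thesis using mult_left_mono[OF _ K1(1)] by (smt (verit) mult.assoc mult_minus_left)
    qed
    have t2: "- (K2 * (9 + 4 * k2^2) * R^2) \<le> Re (\<beta> * cinner (T (n + scaleC (2 * \<alpha>2) u2)) (n + scaleC (2 * \<alpha>2) u2))"
    proof -
      have "- K2 * ((norm n)^2 + (cmod (2 * \<alpha>2))^2) \<le> Re (\<beta> * cinner (T (n + scaleC (2 * \<alpha>2) u2)) (n + scaleC (2 * \<alpha>2) u2))"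
        using K2(2) nN unfolding \<beta>_def by (metis add.commute)
      moreover have "(norm n)^2 + (cmod (2 * \<alpha>2))^2 \<le> (9 + 4 * k2^2) * R^2"
      proof -
        have "(norm n)^2 \<le> (3 * R)^2" using power_mono[OF nR norm_ge_zero] .
        moreover have "(cmod \<alpha>2)^2 \<le> (k2 * R)^2" using power_mono[OF al2 norm_ge_zero] .
        ultimately show ?thesis by (simp add: norm_mult power_mult_distrib algebra_simps)
      qed
      ultimately show ?thesis using mult_left_mono[OF _ K2(1)] by (smt (verit) mult.assoc mult_minus_left)
    qed
    have nTp: "norm (T p) = cmod \<alpha>1 * A" unfolding p_def A_def linD(3)[OF lin u1D] norm_scaleC ..
    have Tp: "norm (T p) \<le> (k1 * A) * R"
    proof -
      have "cmod \<alpha>1 * A \<le> (k1 * R) * A" by (rule mult_right_mono[OF al1]) (simp add: A_def)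
      then show ?thesis unfolding nTp by (simp add: algebra_simps)
    qed
    have nTr: "norm (T r) = cmod \<alpha>2 * B" unfolding r_def B_def linD(3)[OF lin u2D] norm_scaleC ..
    have Tr: "norm (T r) \<le> (k2 * B) * R"
    proof -
      have "cmod \<alpha>2 * B \<le> (k2 * R) * B" by (rule mult_right_mono[OF al2]) (simp add: B_def)
      then show ?thesis unfolding nTr by (simp add: algebra_simps)
    qed
    have np: "norm p \<le> (k1 * U1) * R"
    proof -
      have "cmod \<alpha>1 * U1 \<le> (k1 * R) * U1" by (rule mult_right_mono[OF al1]) (simp add: U1_def)
      then show ?thesis unfolding p_def U1_def norm_scaleC by (simp add: algebra_simps)
    qed
    have nr: "norm r \<le> (k2 * U2) * R"
    proof -
      have "cmod \<alpha>2 * U2 \<le> (k2 * R) * U2" by (rule mult_right_mono[OF al2]) (simp add: U2_def)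
      then show ?thesis unfolding r_def U2_def norm_scaleC by (simp add: algebra_simps)
    qed
    have Tpr: "norm (T (p + r)) \<le> (k1 * A + k2 * B) * R"
    proof -
      have "norm (T (p + r)) \<le> norm (T p) + norm (T r)" unfolding linD(2)[OF lin pD rD] by (rule norm_triangle_ineq)
      then show ?thesis using Tp Tr by (simp add: algebra_simps)
    qed
    have npr: "norm (p + r) \<le> (k1 * U1 + k2 * U2) * R"
    proof -
      have "norm (p + r) \<le> norm p + norm r" by (rule norm_triangle_ineq)
      then show ?thesis using np nr by (simp add: algebra_simps)
    qed
    have qp: "cmod (cinner (T p) p) \<le> (k1 * A) * (k1 * U1) * R^2"
      using order_trans[OF cauchy_schwarz prod_le[OF norm_ge_zero Tp norm_ge_zero np]] .
    have qr: "cmod (cinner (T r) r) \<le> (k2 * B) * (k2 * U2) * R^2"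
      using order_trans[OF cauchy_schwarz prod_le[OF norm_ge_zero Tr norm_ge_zero nr]] .
    have qpr: "cmod (cinner (T (p + r)) (p + r)) \<le> (k1 * A + k2 * B) * (k1 * U1 + k2 * U2) * R^2"
      using order_trans[OF cauchy_schwarz prod_le[OF norm_ge_zero Tpr norm_ge_zero npr]] .
    have Rb2: "\<bar>Re (\<beta> * x)\<bar> \<le> 2 * c" if "cmod x \<le> c" for x c
    proof -
      have "cmod (\<beta> * x) \<le> 2 * c" unfolding norm_mult
        using mult_mono[OF bb that] by simp
      then show ?thesis using abs_Re_le_cmod[of "\<beta> * x"] by linarith
    qed
    have t3: "- (2 * ((k1 * A + k2 * B) * (k1 * U1 + k2 * U2) * R^2)) \<le> Re (\<beta> * cinner (T (p + r)) (p + r))"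
      using Rb2[OF qpr] by linarith
    have t4: "Re (\<beta> * cinner (T p) p) \<le> 2 * ((k1 * A) * (k1 * U1) * R^2)"
      using Rb2[OF qp] by linarith
    have t5: "Re (\<beta> * cinner (T r) r) \<le> 2 * ((k2 * B) * (k2 * U2) * R^2)"
      using Rb2[OF qr] by linarith
    have KR: "Kf * R^2 = K1 * (9 + 4 * k1^2) * R^2 / 2 + K2 * (9 + 4 * k2^2) * R^2 / 2
       + 2 * ((k1 * A + k2 * B) * (k1 * U1 + k2 * U2) * R^2) + 2 * (2 * ((k1 * A) * (k1 * U1) * R^2))
       + 2 * (2 * ((k2 * B) * (k2 * U2) * R^2))"
      unfolding Kf_def by (simp add: field_simps power2_eq_square)
    have "- (Kf * R^2) \<le> Re (\<beta> * cinner (T z) z)"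
      unfolding ReId KR using t1 t2 t3 t4 t5 by linarith
    then show ?thesis unfolding R_def by simp
  qed
  have \<beta>0: "\<beta> \<noteq> 0" using ws \<beta>_def by simp
  have "- complex_of_real (Kf + 1) / \<beta> \<in> num_range D T" using W by simp
  then obtain z where z: "z \<in> D" "norm z = 1" "cinner (T z) z = - complex_of_real (Kf + 1) / \<beta>"
    unfolding num_range_def by auto
  have "Re (\<beta> * cinner (T z) z) = - (Kf + 1)" using \<beta>0 z(3) by simp
  moreover have "- Kf * (norm z)^2 \<le> Re (\<beta> * cinner (T z) z)" by (rule bound[OF z(1)])
  ultimately show False using z(2) by simp
qed

lemma orth_in_scale:
  assumes "k \<noteq> 0"
  shows "orth_in (scaleC k v) D = orth_in v D"
  unfolding orth_in_def using assms by (simp add: cinner_scaleC_right)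

lemma orth_in_sub:
  assumes "csubspace D"
  shows "csubspace (orth_in v D)" "orth_in v D \<subseteq> D"
  using assms unfolding orth_in_def csubspace_def
  by (auto simp: cinner_add_left cinner_scaleC_left)

lemma three_pts:
  assumes "\<And>a b c. a \<in> E \<Longrightarrow> b \<in> E \<Longrightarrow> c \<in> E \<Longrightarrow> a \<noteq> b \<Longrightarrow> a \<noteq> c \<Longrightarrow> b \<noteq> c \<Longrightarrow> False"
  shows "finite E \<and> card E \<le> 3"
proof (rule ccontr)
  assume "\<not> (finite E \<and> card E \<le> 3)"
  then obtain B where B: "B \<subseteq> E" "card B = 3"
  proof (cases "finite E")
    case True
    then have "3 \<le> card E" using \<open>\<not> (finite E \<and> card E \<le> 3)\<close> by simp
    then show ?thesis using obtain_subset_with_card_n that by metis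
  next
    case False
    then show ?thesis using infinite_arbitrarily_large that by metis
  qed
  then obtain a b c where "B = {a, b, c}" "a \<noteq> b" "b \<noteq> c" "a \<noteq> c" by (auto simp: card_3_iff)
  then show False using assms B(1) by auto
qed

lemma pair_sum:
  fixes a b c :: complex
  assumes "cmod a = 1" "cmod b = 1" "cmod c = 1"
  shows "a + b \<noteq> 0 \<or> a + c \<noteq> 0 \<or> b + c \<noteq> 0"
proof (rule ccontr)
  assume h: "\<not> (a + b \<noteq> 0 \<or> a + c \<noteq> 0 \<or> b + c \<noteq> 0)"
  then have "b = - a" "c = - a" by (auto simp: add_eq_0_iff2)
  then have "b + c = - 2 * a" by simp
  then show False using h assms by auto
qed


lemma part1:
  assumes lin: "linear_operator D T" and W: "num_range D T = UNIV"
    and xD: "x \<in> D" and yD: "y \<in> D" and nx: "norm x = 1" and ny: "norm y = 1"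
    and ind: "clin_indep2 x y"
  shows "finite {t. num_range (orth_in (y + scaleC t x) D) T \<noteq> UNIV}
       \<and> card {t. num_range (orth_in (y + scaleC t x) D) T \<noteq> UNIV} \<le> 3"
proof -
  have cs: "csubspace D" using linD(1)[OF lin] .
  define c where "c = cinner y x"
  define w where "w = y - scaleC c x"
  have w0: "w \<noteq> 0"
  proof
    assume "w = 0"
    then have "scaleC (- c) x + scaleC 1 y = 0" unfolding w_def by (simp add: scaleC_minus_left)
    then show False using ind unfolding clin_indep2_def by (meson one_neq_zero)
  qed
  define g where "g = norm w"
  have g0: "g > 0" unfolding g_def using w0 by simp
  define e2 where "e2 = scaleC (complex_of_real (1 / g)) w"
  have wD: "w \<in> D" unfolding w_def using cs xD yD by (simp add: csubD csub_diff)
  have e2D: "e2 \<in> D" unfolding e2_def using cs wD by (simp add: csubD)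
  have o11: "cinner x x = 1" using cinner_self_real[of x] nx by simp
  have ne2: "norm e2 = 1" unfolding e2_def g_def using g0 g_def by (simp add: norm_scaleC norm_divide)
  have o22: "cinner e2 e2 = 1" using cinner_self_real[of e2] ne2 by simp
  have "cinner x w = 0" unfolding w_def c_def using o11
    by (simp add: cinner_diff_right cinner_scaleC_right) (metis cinner_commute)
  then have o12: "cinner x e2 = 0" unfolding e2_def by (simp add: cinner_scaleC_right)
  define sg where "sg t = (c + t) / complex_of_real g" for t
  have sg_inj: "sg t \<noteq> sg t'" if "t \<noteq> t'" for t t' unfolding sg_def using that g0 by simp
  have key: "y + scaleC t x = scaleC (complex_of_real g) (e2 + scaleC (sg t) x)" for t
  proof -
    have "scaleC (complex_of_real g) (e2 + scaleC (sg t) x) = w + scaleC (c + t) x"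
      unfolding e2_def sg_def using g0 by (simp add: scaleC_add_right scaleC_scaleC)
    also have "... = y + scaleC t x" unfolding w_def by (simp add: scaleC_add_left algebra_simps)
    finally show ?thesis by simp
  qed
  have orth: "orth_in (y + scaleC t x) D = orth_in (e2 + scaleC (sg t) x) D" for t
    unfolding key using g0 by (simp add: orth_in_scale)
  define E where "E = {t. num_range (orth_in (y + scaleC t x) D) T \<noteq> UNIV}"
  have hp: "\<exists>\<omega> C. cmod \<omega> = 1 \<and> C \<ge> 0 \<and> (\<forall>m\<in>orth_in (e2 + scaleC (sg t) x) D. - C * (norm m)^2 \<le> Re (\<omega> * cinner (T m) m))"
    if "t \<in> E" for t
    using half_plane[OF lin orth_in_sub(2)[OF cs] orth_in_sub(1)[OF cs]] that unfolding E_def orth by blast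
  have pair: False if "t \<in> E" "t' \<in> E" "t \<noteq> t'"
      and "cmod \<omega> = 1" "C \<ge> 0" "\<forall>m\<in>orth_in (e2 + scaleC (sg t) x) D. - C * (norm m)^2 \<le> Re (\<omega> * cinner (T m) m)"
      and "cmod \<omega>' = 1" "C' \<ge> 0" "\<forall>m\<in>orth_in (e2 + scaleC (sg t') x) D. - C' * (norm m)^2 \<le> Re (\<omega>' * cinner (T m) m)"
      and "\<omega> + \<omega>' \<noteq> 0" for t t' \<omega> \<omega>' C C'
    by (rule core[OF lin W xD e2D o11 o22 o12 sg_inj[OF that(3)] that(4) that(7) that(10) that(5) that(8) that(6) that(9)])
  have "finite E \<and> card E \<le> 3"
  proof (rule three_pts)
    fix a b d assume abd: "a \<in> E" "b \<in> E" "d \<in> E" "a \<noteq> b" "a \<noteq> d" "b \<noteq> d"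
    obtain \<omega>1 C1 where h1: "cmod \<omega>1 = 1" "C1 \<ge> 0" "\<forall>m\<in>orth_in (e2 + scaleC (sg a) x) D. - C1 * (norm m)^2 \<le> Re (\<omega>1 * cinner (T m) m)"
      using hp[OF abd(1)] by blast
    obtain \<omega>2 C2 where h2: "cmod \<omega>2 = 1" "C2 \<ge> 0" "\<forall>m\<in>orth_in (e2 + scaleC (sg b) x) D. - C2 * (norm m)^2 \<le> Re (\<omega>2 * cinner (T m) m)"
      using hp[OF abd(2)] by blast
    obtain \<omega>3 C3 where h3: "cmod \<omega>3 = 1" "C3 \<ge> 0" "\<forall>m\<in>orth_in (e2 + scaleC (sg d) x) D. - C3 * (norm m)^2 \<le> Re (\<omega>3 * cinner (T m) m)"
      using hp[OF abd(3)] by blast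
    consider "\<omega>1 + \<omega>2 \<noteq> 0" | "\<omega>1 + \<omega>3 \<noteq> 0" | "\<omega>2 + \<omega>3 \<noteq> 0" using pair_sum[OF h1(1) h2(1) h3(1)] by blast
    then show False
    proof cases
      case 1 then show False using pair[OF abd(1,2,4) h1 h2] by blast
    next
      case 2 then show False using pair[OF abd(1,3,5) h1 h3] by blast
    next
      case 3 then show False using pair[OF abd(2,3,6) h2 h3] by blast
    qed
  qed
  then show ?thesis unfolding E_def .
qed


lemma part2:
  assumes lin: "linear_operator D T" and W: "num_range D T = UNIV"
    and yD: "y \<in> D" and ny: "norm y = 1" and ne: "orth_in y D \<noteq> {0}" and eps: "\<epsilon> > 0"
  shows "\<exists>w. w \<in> D \<and> norm w = 1 \<and> num_range (orth_in w D) T = UNIV \<and>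
                 cmod (cinner (T w) w - cinner (T y) y) < \<epsilon>"
proof -
  have cs: "csubspace D" using linD(1)[OF lin] .
  have "0 \<in> orth_in y D" unfolding orth_in_def using csubD(1)[OF cs] by simp
  then obtain x0 where x0: "x0 \<in> orth_in y D" "x0 \<noteq> 0" using ne by blast
  define x where "x = scaleC (complex_of_real (1 / norm x0)) x0"
  have xD: "x \<in> D" unfolding x_def using x0(1) cs unfolding orth_in_def by (simp add: csubD)
  have nx: "norm x = 1" unfolding x_def using x0(2) by (simp add: norm_scaleC norm_divide)
  have xy: "cinner x y = 0" unfolding x_def using x0(1) unfolding orth_in_def by (simp add: cinner_scaleC_left)
  have yx: "cinner y x = 0" using xy cinner_commute[of y x] by simp
  have o11: "cinner x x = 1" using cinner_self_real[of x] nx by simp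
  have oyy: "cinner y y = 1" using cinner_self_real[of y] ny by simp
  have ind: "clin_indep2 x y" unfolding clin_indep2_def
  proof (intro allI impI)
    fix a b assume h: "scaleC a x + scaleC b y = 0"
    have "cinner (scaleC a x + scaleC b y) x = 0" using h by simp
    then have a0: "a = 0" using o11 yx by (simp add: cinner_add_left cinner_scaleC_left)
    have "cinner (scaleC a x + scaleC b y) y = 0" using h by simp
    then have "b = 0" using oyy xy by (simp add: cinner_add_left cinner_scaleC_left)
    then show "a = 0 \<and> b = 0" using a0 by simp
  qed
  define E where "E = {t. num_range (orth_in (y + scaleC t x) D) T \<noteq> UNIV}"
  have finE: "finite E" using part1[OF lin W xD yD nx ny ind] unfolding E_def by simp
  define A1 where "A1 = cinner (T y) x"
  define A2 where "A2 = cinner (T x) y"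
  define Qx where "Qx = cinner (T x) x"
  define Qy where "Qy = cinner (T y) y"
  define Kq where "Kq = cmod A1 + cmod A2 + cmod Qx + cmod Qy + 1"
  have Kq0: "Kq > 0" unfolding Kq_def using norm_ge_zero[of A1] norm_ge_zero[of A2] norm_ge_zero[of Qx] norm_ge_zero[of Qy] by linarith
  define \<delta> where "\<delta> = min 1 (\<epsilon> / Kq)"
  have d0: "\<delta> > 0" unfolding \<delta>_def using eps Kq0 by simp
  define f where "f n = complex_of_real (\<delta> / (real n + 2))" for n :: nat
  have "inj f" unfolding f_def inj_def using d0 by (auto simp: field_simps)
  then have "infinite (range f)" by (rule range_inj_infinite)
  then have "\<not> range f \<subseteq> E" using finE finite_subset by blast
  then obtain k where k: "f k \<notin> E" by blast
  define t where "t = \<delta> / (real k + 2)"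
  have t0: "t > 0" unfolding t_def using d0 by simp
  have tdel: "t \<le> \<delta> / 2" unfolding t_def by (rule divide_left_mono) (use d0 in auto)
  have t1: "t \<le> 1" using tdel \<delta>_def by simp
  have teps: "t * Kq < \<epsilon>"
  proof -
    have "t < \<epsilon> / Kq" using tdel d0 unfolding \<delta>_def by simp
    then show ?thesis using Kq0 by (simp add: field_simps)
  qed
  have tE: "complex_of_real t \<notin> E" using k unfolding f_def t_def .
  define v where "v = y + scaleC (complex_of_real t) x"
  have vD: "v \<in> D" unfolding v_def using cs xD yD by (simp add: csubD)
  have vv: "cinner v v = complex_of_real (1 + t^2)"
    using cinner_comb[of 1 y "complex_of_real t" x] oyy o11 xy yx unfolding v_def
    by (simp add: power2_eq_square)
  define nv where "nv = norm v"
  have nv2: "nv^2 = 1 + t^2" using cinner_self_real[of v] vv unfolding nv_def by (metis of_real_eq_iff)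
  have nv0: "nv > 0"
  proof -
    have "nv \<noteq> 0"
    proof
      assume "nv = 0"
      then have "1 + t^2 = 0" using nv2 by simp
      then show False using zero_le_power2[of t] by linarith
    qed
    then show ?thesis unfolding nv_def by simp
  qed
  define wv where "wv = scaleC (complex_of_real (1 / nv)) v"
  have wD: "wv \<in> D" unfolding wv_def using cs vD by (simp add: csubD)
  have nw: "norm wv = 1" unfolding wv_def nv_def using nv0 nv_def by (simp add: norm_scaleC norm_divide)
  have orth: "orth_in wv D = orth_in v D" unfolding wv_def using nv0 by (simp add: orth_in_scale)
  have NR: "num_range (orth_in wv D) T = UNIV" using tE unfolding orth E_def v_def by simp
  have qv: "cinner (T v) v = Qy + complex_of_real t * A1 + complex_of_real t * A2 + complex_of_real (t^2) * Qx"
    using q_comb[OF lin yD xD, of 1 "complex_of_real t"] unfolding v_def A1_def A2_def Qx_def Qy_def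
    by (simp add: power2_eq_square)
  have qw: "cinner (T wv) wv = cinner (T v) v / complex_of_real (1 + t^2)"
    using q_scale[OF lin vD, of "complex_of_real (1 / nv)"] unfolding wv_def nv2[symmetric]
    by (simp add: power2_eq_square)
  have dif: "cinner (T wv) wv - Qy = (complex_of_real t * A1 + complex_of_real t * A2 + complex_of_real (t^2) * (Qx - Qy)) / complex_of_real (1 + t^2)"
    unfolding qw qv
    proof -
      have "1 + t^2 \<noteq> 0" using zero_le_power2[of t] by linarith
      then have "complex_of_real (1 + t^2) \<noteq> 0" by (metis of_real_eq_0_iff)
      then show "(Qy + complex_of_real t * A1 + complex_of_real t * A2 + complex_of_real (t^2) * Qx) / complex_of_real (1 + t^2) - Qy =
        (complex_of_real t * A1 + complex_of_real t * A2 + complex_of_real (t^2) * (Qx - Qy)) / complex_of_real (1 + t^2)"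
        by (simp add: field_simps)
    qed
  have "cmod (cinner (T wv) wv - Qy) \<le> cmod (complex_of_real t * A1 + complex_of_real t * A2 + complex_of_real (t^2) * (Qx - Qy))"
  proof -
    let ?N = "complex_of_real t * A1 + complex_of_real t * A2 + complex_of_real (t^2) * (Qx - Qy)"
    have den: "cmod (complex_of_real (1 + t^2)) = 1 + t^2" by (simp only: norm_of_real) (simp add: abs_of_nonneg add_nonneg_nonneg)
    have "cmod ?N * 1 \<le> cmod ?N * (1 + t^2)" by (rule mult_left_mono) simp_all
    then have "cmod ?N / (1 + t^2) \<le> cmod ?N"
      by (simp add: divide_le_eq add_pos_nonneg)
    then show ?thesis unfolding dif norm_divide den .
  qed
  also have "... \<le> t * cmod A1 + t * cmod A2 + t^2 * (cmod Qx + cmod Qy)"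
  proof -
    have "cmod (complex_of_real t * A1 + complex_of_real t * A2 + complex_of_real (t^2) * (Qx - Qy))
      \<le> cmod (complex_of_real t * A1) + cmod (complex_of_real t * A2) + cmod (complex_of_real (t^2) * (Qx - Qy))"
      using norm_triangle_ineq[of "complex_of_real t * A1 + complex_of_real t * A2" "complex_of_real (t^2) * (Qx - Qy)"]
        norm_triangle_ineq[of "complex_of_real t * A1" "complex_of_real t * A2"] by linarith
    moreover have "cmod (complex_of_real (t^2) * (Qx - Qy)) \<le> t^2 * (cmod Qx + cmod Qy)"
    proof -
      have "cmod (complex_of_real (t^2) * (Qx - Qy)) = t^2 * cmod (Qx - Qy)" by (simp only: norm_mult norm_of_real) simp
      also have "... \<le> t^2 * (cmod Qx + cmod Qy)" by (rule mult_left_mono[OF norm_triangle_ineq4 zero_le_power2])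
      finally show ?thesis .
    qed
    moreover have "cmod (complex_of_real t * A1) = t * cmod A1" using t0 by (simp add: norm_mult)
    moreover have "cmod (complex_of_real t * A2) = t * cmod A2" using t0 by (simp add: norm_mult)
    ultimately show ?thesis by linarith
  qed
  also have "... \<le> t * (Kq - 1)"
  proof -
    have "t^2 \<le> t" using t0 t1 by (simp add: power2_eq_square mult_le_cancel_left1)
    then have "t^2 * (cmod Qx + cmod Qy) \<le> t * (cmod Qx + cmod Qy)" by (simp add: mult_right_mono)
    then show ?thesis unfolding Kq_def by (simp add: algebra_simps)
  qed
  also have "... < \<epsilon>" using teps t0 by (simp add: algebra_simps)
  finally show ?thesis using wD nw NR unfolding Qy_def by blast
qed

theorem lemma2p7:
  fixes D :: "'h::chilbert_space set" and T :: "'h \<Rightarrow> 'h"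
  assumes "separable_space TYPE('h)"
    and "infinite_dimensional TYPE('h)"
    and "linear_operator D T"
    and "num_range D T = UNIV"
  shows "(\<forall>x y. x \<in> D \<longrightarrow> y \<in> D \<longrightarrow> norm x = 1 \<longrightarrow> norm y = 1 \<longrightarrow> clin_indep2 x y \<longrightarrow>
            (let E = {t. num_range (orth_in (y + scaleC t x) D) T \<noteq> UNIV}
             in finite E \<and> card E \<le> 3))
       \<and> (\<forall>y. y \<in> D \<longrightarrow> norm y = 1 \<longrightarrow> orth_in y D \<noteq> {0} \<longrightarrow>
            (\<forall>\<epsilon>>0. \<exists>w. w \<in> D \<and> norm w = 1 \<and> num_range (orth_in w D) T = UNIV \<and>
                 cmod (cinner (T w) w - cinner (T y) y) < \<epsilon>))"
proof (intro conjI allI impI)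
  fix x y assume "x \<in> D" "y \<in> D" "norm x = 1" "norm y = 1" "clin_indep2 x y"
  then show "let E = {t. num_range (orth_in (y + scaleC t x) D) T \<noteq> UNIV} in finite E \<and> card E \<le> 3"
    using part1[OF assms(3,4)] by (simp add: Let_def)
next
  fix y :: 'h and \<epsilon> :: real
  assume "y \<in> D" "norm y = 1" "orth_in y D \<noteq> {0}" "\<epsilon> > 0"
  then show "\<exists>w. w \<in> D \<and> norm w = 1 \<and> num_range (orth_in w D) T = UNIV \<and>
                 cmod (cinner (T w) w - cinner (T y) y) < \<epsilon>"
    using part2[OF assms(3,4)] by blast
qed

end
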